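(* Let $n\in\mathbb N$ and let $K_{4n}$ be the complete graph on $4n$ vertices. The graph obtained from $K_{4n}$ by deleting a single edge $\{u,v\}$ exhibits Laplacian perfect state transfer between $u$ and $v$. More generally, if $F$ is any nonempty set of pairwise non-adjacent (vertex-disjoint) edges of $K_{4n}$, then the graph $K_{4n}-F$ exhibits Laplacian perfect state transfer at time $\pi/2$ between the two end vertices of every edge in $F$.
   Context: For a graph with Laplacian $L=D-A$ (degree matrix minus adjacency matrix), $U_L(t)=\exp(-itL)$. The graph exhibits Laplacian perfect state transfer between distinct vertices $u,v$ at time $\tau$ if $U_L(\tau)\mathbf e_u=\gamma\mathbf e_v$ for some $\gamma\in\mathbb C$, where $\mathbf e_u$ is the standard basis vector of $u$. *)

theory Defs
  imports "Jordan_Normal_Form.Matrix" Complex_Main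
begin

definition mat_exp :: "complex mat \<Rightarrow> complex mat" where
  "mat_exp M = mat (dim_row M) (dim_col M)
     (\<lambda>(i,j). \<Sum>k. (M ^\<^sub>m k) $$ (i,j) / of_nat (fact k))"

definition adj_mat :: "nat \<Rightarrow> (nat \<Rightarrow> nat \<Rightarrow> bool) \<Rightarrow> complex mat" where
  "adj_mat N E = mat N N (\<lambda>(i,j). if E i j then 1 else 0)"

definition deg_mat :: "nat \<Rightarrow> (nat \<Rightarrow> nat \<Rightarrow> bool) \<Rightarrow> complex mat" where
  "deg_mat N E = mat N N (\<lambda>(i,j). if i = j then of_nat (card {k\<in>{0..<N}. E i k}) else 0)"

definition laplacian :: "nat \<Rightarrow> (nat \<Rightarrow> nat \<Rightarrow> bool) \<Rightarrow> complex mat" where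
  "laplacian N E = deg_mat N E - adj_mat N E"

definition lap_walk :: "nat \<Rightarrow> (nat \<Rightarrow> nat \<Rightarrow> bool) \<Rightarrow> real \<Rightarrow> complex mat" where
  "lap_walk N E t = mat_exp ((- \<i> * of_real t) \<cdot>\<^sub>m laplacian N E)"

definition lap_pst :: "nat \<Rightarrow> (nat \<Rightarrow> nat \<Rightarrow> bool) \<Rightarrow> nat \<Rightarrow> nat \<Rightarrow> real \<Rightarrow> bool" where
  "lap_pst N E u v tau \<longleftrightarrow> u < N \<and> v < N \<and> u \<noteq> v \<and>
     (\<exists>\<gamma>::complex. lap_walk N E tau *\<^sub>v unit_vec N u = \<gamma> \<cdot>\<^sub>v unit_vec N v)"

definition complete_minus :: "nat \<Rightarrow> nat set set \<Rightarrow> nat \<Rightarrow> nat \<Rightarrow> bool" where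
  "complete_minus N F i j \<longleftrightarrow> i < N \<and> j < N \<and> i \<noteq> j \<and> {i,j} \<notin> F"

end

theory Submission
  imports Defs
begin


lemma exp_vals:
  fixes n :: nat
  shows "exp ((- \<i> * of_real (pi/2)) * of_nat (4*n)) = 1"
    and "exp ((- \<i> * of_real (pi/2)) * (of_nat (4*n) - 2)) = -1"
proof -
  have a: "(- \<i> * of_real (pi/2)) * of_nat (4*n) = of_nat n * (-(2 * of_real pi * \<i>))"
    by (simp add: algebra_simps)
  have b: "exp (-(2 * of_real pi * \<i>)) = 1" by (simp add: exp_minus)
  show 1: "exp ((- \<i> * of_real (pi/2)) * of_nat (4*n)) = 1"
    unfolding a exp_of_nat_mult b by simp
  have "exp ((- \<i> * of_real (pi/2)) * (of_nat (4*n) - 2)) = exp (\<i> * of_real pi + (- \<i> * of_real (pi/2)) * of_nat (4*n))"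
    by (rule arg_cong[where f=exp]) (simp add: algebra_simps)
  also have "\<dots> = -1" by (simp only: exp_add 1 exp_pi_i') simp
  finally show "exp ((- \<i> * of_real (pi/2)) * (of_nat (4*n) - 2)) = -1" .
qed
lemma pow_eig:
  assumes M: "M \<in> carrier_mat N N" and x: "x \<in> carrier_vec N" and e: "M *\<^sub>v x = \<mu> \<cdot>\<^sub>v x"
  shows "(M ^\<^sub>m k) *\<^sub>v x = (\<mu> ^ k) \<cdot>\<^sub>v (x :: complex vec)"
proof (induction k)
  case 0
  have "(M ^\<^sub>m 0) *\<^sub>v x = 1\<^sub>m N *\<^sub>v x" using M by simp
  also have "\<dots> = x" by (rule one_mult_mat_vec[OF x])
  finally show ?case by simp
next
  case (Suc k)
  have MK: "M ^\<^sub>m k \<in> carrier_mat N N" by (rule pow_carrier_mat[OF M])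
  have "(M ^\<^sub>m Suc k) *\<^sub>v x = (M ^\<^sub>m k * M) *\<^sub>v x" by simp
  also have "\<dots> = (M ^\<^sub>m k) *\<^sub>v (M *\<^sub>v x)" by (rule assoc_mult_mat_vec[OF MK M x])
  also have "\<dots> = (M ^\<^sub>m k) *\<^sub>v (\<mu> \<cdot>\<^sub>v x)" by (simp only: e)
  also have "\<dots> = \<mu> \<cdot>\<^sub>v ((M ^\<^sub>m k) *\<^sub>v x)" by (rule mult_mat_vec[OF MK x])
  also have "\<dots> = \<mu> \<cdot>\<^sub>v ((\<mu> ^ k) \<cdot>\<^sub>v x)" by (simp only: Suc.IH)
  also have "\<dots> = (\<mu> ^ Suc k) \<cdot>\<^sub>v x" by (simp add: smult_smult_assoc)
  finally show ?case .
qed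

lemma exp_sum_lemma:
  "(\<lambda>k. (a::complex) * \<mu> ^ k / of_nat (fact k)) sums (a * exp \<mu>)"
proof -
  have "(\<lambda>k. a * (\<mu> ^ k /\<^sub>R fact k)) sums (a * exp \<mu>)"
    by (intro sums_mult exp_converges)
  moreover have "\<And>k. a * (\<mu> ^ k /\<^sub>R fact k) = a * \<mu> ^ k / of_nat (fact k)"
    by (simp add: scaleR_conv_of_real divide_inverse)
  ultimately show ?thesis by simp
qed





lemma lap_entry:
  assumes "i < N" "j < N"
  shows "laplacian N E $$ (i,j) =
    (if i = j then of_nat (card {k\<in>{0..<N}. E i k}) else 0) - (if E i j then 1 else 0)"
  using assms by (simp add: laplacian_def deg_mat_def adj_mat_def)

lemma lap_carrier: "laplacian N E \<in> carrier_mat N N"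
  unfolding laplacian_def deg_mat_def adj_mat_def by (rule minus_carrier_mat) auto




lemma lap_rowsum:
  assumes i: "i < N" and irr: "\<not> E i i"
  shows "(laplacian N E *\<^sub>v vec N (\<lambda>_. 1)) $ i = 0"
proof -
  have "(laplacian N E *\<^sub>v vec N (\<lambda>_. 1)) $ i = (\<Sum>j\<in>{0..<N}. laplacian N E $$ (i,j))"
    using i lap_carrier[of N E] by (simp add: scalar_prod_def)
  also have "\<dots> = (\<Sum>j\<in>{0..<N}. (if i = j then of_nat (card {k\<in>{0..<N}. E i k}) else 0) - (if E i j then 1 else 0))"
    by (rule sum.cong) (simp_all add: lap_entry i)
  also have "\<dots> = of_nat (card {k\<in>{0..<N}. E i k}) - (\<Sum>j\<in>{0..<N}. (if E i j then 1 else 0))"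
    using i by (simp add: sum_subtractf)
  also have "(\<Sum>j\<in>{0..<N}. (if E i j then 1 else 0)) = (\<Sum>j\<in>{k\<in>{0..<N}. E i k}. (1::complex))"
    by (simp only: sum.inter_filter[OF finite_atLeastLessThan])
  also have "\<dots> = of_nat (card {k\<in>{0..<N}. E i k})" by simp
  finally show ?thesis by simp
qed




lemma lap_col:
  assumes disj: "\<forall>e\<in>F. \<forall>e'\<in>F. e \<noteq> e' \<longrightarrow> e \<inter> e' = {}"
    and uv: "{u,v} \<in> F" and u: "u < N" and v: "v < N" and uv': "u \<noteq> v" and i: "i < N"
  shows "laplacian N (complete_minus N F) $$ (i,u) = (if i = u then of_nat N - 2 else if i = v then 0 else -1)"
proof -
  have key: "k = v" if k: "{u,k} \<in> F" for k
  proof (rule ccontr)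
    assume kv: "k \<noteq> v"
    then have "{u,k} \<noteq> {u,v}" using uv' by (auto simp: doubleton_eq_iff)
    then have "{u,k} \<inter> {u,v} = {}" using disj k uv by (meson)
    then show False by blast
  qed
  have keyF: "({u,k} \<in> F) = (k = v)" for k using key uv by blast
  have keyc: "({k,u} \<in> F) = (k = v)" for k using keyF by (simp add: insert_commute)
  have vu: "{v,u} \<in> F" using uv by (simp add: insert_commute)
  have S: "{k\<in>{0..<N}. complete_minus N F u k} = {0..<N} - {u,v}"
    using u v uv' unfolding complete_minus_def by (auto simp: keyF)
  have C: "card ({0..<N} - {u,v}) = N - 2" using u v uv' by (subst card_Diff_subset) auto
  have N2: "N \<ge> 2" using u v uv' by linarith
  have C': "(of_nat (N - 2) :: complex) = of_nat N - 2" using N2 by (simp add: of_nat_diff)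
  show ?thesis
  proof (cases "i = u")
    case True
    have nE: "\<not> complete_minus N F u u" by (simp add: complete_minus_def)
    have "laplacian N (complete_minus N F) $$ (u,u) = of_nat (card {k\<in>{0..<N}. complete_minus N F u k})"
      using nE by (simp add: lap_entry[OF u u])
    also have "\<dots> = of_nat N - 2" unfolding S C C' ..
    finally show ?thesis using True by simp
  next
    case False
    have "complete_minus N F i u = (i \<noteq> v)" using False i u by (simp add: complete_minus_def keyc)
    then show ?thesis using False by (simp add: lap_entry[OF i u])
  qed
qed




lemma col_unit: "(A :: complex mat) \<in> carrier_mat N N \<Longrightarrow> i < N \<Longrightarrow> j < N \<Longrightarrow> (A *\<^sub>v unit_vec N j) $ i = A $$ (i,j)"
  by simp

lemma smult_eig:
  assumes L: "L \<in> carrier_mat N N" and x: "x \<in> carrier_vec N" and e: "L *\<^sub>v x = lam \<cdot>\<^sub>v x"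
  shows "(c \<cdot>\<^sub>m L) *\<^sub>v x = (c * lam) \<cdot>\<^sub>v (x :: complex vec)"
proof -
  have "(c \<cdot>\<^sub>m L) *\<^sub>v x = c \<cdot>\<^sub>v (L *\<^sub>v x)"
    using L x by (intro eq_vecI) (auto simp: scalar_prod_def sum_distrib_left mult.assoc)
  also have "\<dots> = (c * lam) \<cdot>\<^sub>v x" by (simp add: e smult_smult_assoc)
  finally show ?thesis .
qed

theorem corollary2p5:
  fixes n :: nat and F :: "nat set set"
  assumes edges: "\<forall>e\<in>F. \<exists>a b. a < 4*n \<and> b < 4*n \<and> a \<noteq> b \<and> e = {a,b}"
    and disj: "\<forall>e\<in>F. \<forall>e'\<in>F. e \<noteq> e' \<longrightarrow> e \<inter> e' = {}"
    and nonempty: "F \<noteq> {}"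
  shows "\<forall>u v. {u,v} \<in> F \<longrightarrow> lap_pst (4*n) (complete_minus (4*n) F) u v (pi/2)"
proof (intro allI impI)
  fix u v assume uv: "{u,v} \<in> F"
  define N where "N = 4*n"
  obtain a b where ab: "a < 4*n" "b < 4*n" "a \<noteq> b" "{u,v} = {a,b}" using edges uv by blast
  have u: "u < N" and v: "v < N" and uv': "u \<noteq> v" using ab unfolding N_def by (auto simp: doubleton_eq_iff)
  have vu: "{v,u} \<in> F" using uv by (simp add: insert_commute)
  define E where "E = complete_minus N F"
  define L where "L = laplacian N E"
  define c :: complex where "c = - \<i> * of_real (pi/2)"
  define M where "M = c \<cdot>\<^sub>m L"
  have LC: "L \<in> carrier_mat N N" unfolding L_def by (rule lap_carrier)
  have MC: "M \<in> carrier_mat N N" unfolding M_def using LC by simp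
  have Npos: "N > 0" using u by simp
  have Nnz: "(of_nat N :: complex) \<noteq> 0" using Npos by simp
  define one :: "complex vec" where "one = vec N (\<lambda>_. 1)"
  define d :: "complex vec" where "d = unit_vec N u - unit_vec N v"
  define s :: "complex vec" where "s = unit_vec N u + unit_vec N v - (2 / of_nat N) \<cdot>\<^sub>v one"
  have oneC: "one \<in> carrier_vec N" unfolding one_def by simp
  have dC: "d \<in> carrier_vec N" unfolding d_def by simp
  have sC: "s \<in> carrier_vec N" unfolding s_def one_def by simp
  have colu: "(L *\<^sub>v unit_vec N u) $ i = (if i = u then of_nat N - 2 else if i = v then 0 else -1)"
    if i: "i < N" for i
  proof -
    have "(L *\<^sub>v unit_vec N u) $ i = L $$ (i,u)" by (rule col_unit[OF LC i u])
    also have "\<dots> = (if i = u then of_nat N - 2 else if i = v then 0 else -1)"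
      unfolding L_def E_def by (rule lap_col[OF disj uv u v uv' i])
    finally show ?thesis .
  qed
  have colv: "(L *\<^sub>v unit_vec N v) $ i = (if i = v then of_nat N - 2 else if i = u then 0 else -1)"
    if i: "i < N" for i
  proof -
    have "(L *\<^sub>v unit_vec N v) $ i = L $$ (i,v)" by (rule col_unit[OF LC i v])
    also have "\<dots> = (if i = v then of_nat N - 2 else if i = u then 0 else -1)"
      unfolding L_def E_def using uv' by (intro lap_col[OF disj vu v u]) (use i in auto)
    finally show ?thesis .
  qed
  have rows: "(L *\<^sub>v one) $ i = 0" if i: "i < N" for i
    unfolding L_def one_def E_def by (rule lap_rowsum[OF i]) (simp add: complete_minus_def)
  have Lone: "L *\<^sub>v one = 0 \<cdot>\<^sub>v one"
    using LC oneC rows by (intro eq_vecI) auto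
  have Ld: "L *\<^sub>v d = (of_nat N - 2) \<cdot>\<^sub>v d"
  proof (rule eq_vecI)
    show "dim_vec (L *\<^sub>v d) = dim_vec ((of_nat N - 2) \<cdot>\<^sub>v d)" using LC dC by simp
    fix i assume "i < dim_vec ((of_nat N - 2) \<cdot>\<^sub>v d)"
    then have i: "i < N" using dC by simp
    have "L *\<^sub>v d = L *\<^sub>v unit_vec N u - L *\<^sub>v unit_vec N v"
      unfolding d_def by (rule mult_minus_distrib_mat_vec[OF LC]) auto
    then have "(L *\<^sub>v d) $ i = (L *\<^sub>v unit_vec N u) $ i - (L *\<^sub>v unit_vec N v) $ i"
      using i LC by simp
    also have "\<dots> = (if i = u then of_nat N - 2 else if i = v then 0 else -1) - (if i = v then of_nat N - 2 else if i = u then 0 else -1)"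
      using colu[OF i] colv[OF i] by simp
    also have "\<dots> = ((of_nat N - 2) \<cdot>\<^sub>v d) $ i"
      using i u v uv' unfolding d_def by auto
    finally show "(L *\<^sub>v d) $ i = ((of_nat N - 2) \<cdot>\<^sub>v d) $ i" .
  qed
  have Ls: "L *\<^sub>v s = of_nat N \<cdot>\<^sub>v s"
  proof (rule eq_vecI)
    show "dim_vec (L *\<^sub>v s) = dim_vec (of_nat N \<cdot>\<^sub>v s)" using LC sC by simp
    fix i assume "i < dim_vec (of_nat N \<cdot>\<^sub>v s)"
    then have i: "i < N" using sC by simp
    have "L *\<^sub>v s = L *\<^sub>v (unit_vec N u + unit_vec N v) - L *\<^sub>v ((2 / of_nat N) \<cdot>\<^sub>v one)"
      unfolding s_def by (rule mult_minus_distrib_mat_vec[OF LC]) (auto simp: oneC)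
    also have "\<dots> = (L *\<^sub>v unit_vec N u + L *\<^sub>v unit_vec N v) - (2 / of_nat N) \<cdot>\<^sub>v (L *\<^sub>v one)"
      by (simp add: mult_add_distrib_mat_vec[OF LC] mult_mat_vec[OF LC oneC])
    finally have "(L *\<^sub>v s) $ i = (L *\<^sub>v unit_vec N u) $ i + (L *\<^sub>v unit_vec N v) $ i - (2 / of_nat N) * (L *\<^sub>v one) $ i"
      using i LC by simp
    also have "\<dots> = (if i = u then of_nat N - 2 else if i = v then 0 else -1) + (if i = v then of_nat N - 2 else if i = u then 0 else -1)"
      using colu[OF i] colv[OF i] rows[OF i] by simp
    also have "\<dots> = (of_nat N \<cdot>\<^sub>v s) $ i"
      using i u v uv' Nnz unfolding s_def one_def by (auto simp: field_simps)
    finally show "(L *\<^sub>v s) $ i = (of_nat N \<cdot>\<^sub>v s) $ i" .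
  qed
  have decomp: "unit_vec N u = (1 / of_nat N) \<cdot>\<^sub>v one + ((1/2) \<cdot>\<^sub>v d + (1/2) \<cdot>\<^sub>v s)"
    using u v uv' Nnz unfolding d_def s_def one_def by (intro eq_vecI) (auto simp: field_simps)
  have Mone: "M *\<^sub>v one = (c * 0) \<cdot>\<^sub>v one" unfolding M_def by (rule smult_eig[OF LC oneC Lone])
  have Md: "M *\<^sub>v d = (c * (of_nat N - 2)) \<cdot>\<^sub>v d" unfolding M_def by (rule smult_eig[OF LC dC Ld])
  have Ms: "M *\<^sub>v s = (c * of_nat N) \<cdot>\<^sub>v s" unfolding M_def by (rule smult_eig[OF LC sC Ls])
  have entry: "(M ^\<^sub>m k) $$ (i,u) = (1 / of_nat N * one $ i) * (c * 0) ^ k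
      + (1/2 * d $ i) * (c * (of_nat N - 2)) ^ k + (1/2 * s $ i) * (c * of_nat N) ^ k"
    if i: "i < N" for i k
  proof -
    have MK: "M ^\<^sub>m k \<in> carrier_mat N N" by (rule pow_carrier_mat[OF MC])
    have "(M ^\<^sub>m k) $$ (i,u) = (M ^\<^sub>m k *\<^sub>v unit_vec N u) $ i" by (rule col_unit[OF MK i u, symmetric])
    also have "M ^\<^sub>m k *\<^sub>v unit_vec N u = (1 / of_nat N) \<cdot>\<^sub>v (M ^\<^sub>m k *\<^sub>v one)
        + ((1/2) \<cdot>\<^sub>v (M ^\<^sub>m k *\<^sub>v d) + (1/2) \<cdot>\<^sub>v (M ^\<^sub>m k *\<^sub>v s))"
      unfolding decomp using MK oneC dC sC
      by (simp add: mult_add_distrib_mat_vec[OF MK] mult_mat_vec[OF MK])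
    also have "\<dots> = (1 / of_nat N) \<cdot>\<^sub>v ((c * 0) ^ k \<cdot>\<^sub>v one)
        + ((1/2) \<cdot>\<^sub>v ((c * (of_nat N - 2)) ^ k \<cdot>\<^sub>v d) + (1/2) \<cdot>\<^sub>v ((c * of_nat N) ^ k \<cdot>\<^sub>v s))"
      by (simp only: pow_eig[OF MC oneC Mone] pow_eig[OF MC dC Md] pow_eig[OF MC sC Ms])
    finally show ?thesis using i oneC dC sC by (simp add: algebra_simps)
  qed
  have series: "(\<lambda>k. (M ^\<^sub>m k) $$ (i,u) / of_nat (fact k)) sums (if i = v then 1 else 0)"
    if i: "i < N" for i
  proof -
    let ?a = "1 / of_nat N * one $ i" and ?b = "1/2 * d $ i" and ?s = "1/2 * s $ i"
    have e1: "exp (c * of_nat N) = 1" unfolding c_def N_def by (rule exp_vals(1))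
    have e2: "exp (c * (of_nat N - 2)) = -1" unfolding c_def N_def by (rule exp_vals(2))
    have "(\<lambda>k. ?a * (c*0) ^ k / of_nat (fact k) + ?b * (c * (of_nat N - 2)) ^ k / of_nat (fact k)
          + ?s * (c * of_nat N) ^ k / of_nat (fact k)) sums
          (?a * exp (c*0) + ?b * exp (c * (of_nat N - 2)) + ?s * exp (c * of_nat N))"
      by (intro sums_add exp_sum_lemma)
    moreover have "(\<lambda>k. ?a * (c*0) ^ k / of_nat (fact k) + ?b * (c * (of_nat N - 2)) ^ k / of_nat (fact k)
          + ?s * (c * of_nat N) ^ k / of_nat (fact k)) = (\<lambda>k. (M ^\<^sub>m k) $$ (i,u) / of_nat (fact k))"
      by (rule ext) (simp only: entry[OF i] add_divide_distrib)
    moreover have "?a * exp (c*0) + ?b * exp (c * (of_nat N - 2)) + ?s * exp (c * of_nat N) = (if i = v then 1 else 0)"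
      unfolding e1 e2 using i u v uv' Nnz unfolding d_def s_def one_def by (auto simp: field_simps)
    ultimately show ?thesis by simp
  qed
  have ME: "mat_exp M \<in> carrier_mat N N" using MC by (simp add: mat_exp_def)
  have walk: "lap_walk N E (pi/2) = mat_exp M" unfolding lap_walk_def M_def c_def L_def ..
  have "lap_walk N E (pi/2) *\<^sub>v unit_vec N u = 1 \<cdot>\<^sub>v unit_vec N v"
  proof (rule eq_vecI)
    show "dim_vec (lap_walk N E (pi/2) *\<^sub>v unit_vec N u) = dim_vec (1 \<cdot>\<^sub>v unit_vec N v)"
      using ME unfolding walk by simp
    fix i assume "i < dim_vec (1 \<cdot>\<^sub>v (unit_vec N v :: complex vec))"
    then have i: "i < N" by simp
    have "(lap_walk N E (pi/2) *\<^sub>v unit_vec N u) $ i = mat_exp M $$ (i,u)"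
      unfolding walk by (rule col_unit[OF ME i u])
    also have "\<dots> = (\<Sum>k. (M ^\<^sub>m k) $$ (i,u) / of_nat (fact k))"
      using MC i u by (simp add: mat_exp_def)
    also have "\<dots> = (if i = v then 1 else 0)" by (rule sums_unique[symmetric, OF series[OF i]])
    finally show "(lap_walk N E (pi/2) *\<^sub>v unit_vec N u) $ i = (1 \<cdot>\<^sub>v unit_vec N v) $ i"
      using i v by simp
  qed
  then have "lap_pst N E u v (pi/2)" unfolding lap_pst_def using u v uv' by blast
  then show "lap_pst (4*n) (complete_minus (4*n) F) u v (pi/2)" unfolding E_def N_def .
qed


end
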